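(* Consider $\bm{y}=\bm{A}\bm{x}+\bm{w}$ over $\mathbb{H}\in\{\mathbb{R},\mathbb{C}\}$, with $\bm A$ having i.i.d. entries $\mathcal{N}(0,1/m)$ (resp. $\mathcal{CN}(0,1/m)$), Gaussian noise of variance $\sigma_w^2=\delta\sigma_0^2$ ($\delta=m/n$, $\sigma_0^2>0$ constant), and signal entries i.i.d. from the least-favorable distribution with sparsity level $\epsilon\in(0,1]$, recovered by AMP with (real or complex) soft thresholding and optimal threshold. Let $\delta^\dagger$ be the MSE-optimal measurement ratio, which satisfies $\delta^\dagger=2M(\epsilon,\alpha^\dagger)$ in the real case and $\delta^\dagger=2M_C(\epsilon,\alpha^\dagger)$ in the complex case. Then $\delta^{\dagger}<2$. Moreover, if $M(\epsilon,\alpha^{\dagger})<0.5$ in the real case, respectively $M_C(\epsilon,\alpha^{\dagger})<0.5$ in the complex case, then $\delta^{\dagger}<1$.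
   Context: Real case: the least-favorable distribution is $p_x=\frac{\epsilon}{2}\Delta_{x=-\mu}+(1-\epsilon)\Delta_{x=0}+\frac{\epsilon}{2}\Delta_{x=\mu}$ with $\mu\to\infty$, and $$M(\epsilon,\alpha)=\epsilon(1+\alpha^2)+(1-\epsilon)\left[2(1+\alpha^2)\Phi(-\alpha)-2\alpha\phi(\alpha)\right],\quad \alpha^\dagger=\arg\min_{\alpha\ge0}M(\epsilon,\alpha).$$ Complex case: $|x|$ has distribution $(1-\epsilon)\Delta_{|x|=0}+\epsilon\Delta_{|x|=+\infty}$ with isotropic phase, the estimator is $\eta(\beta,\lambda)=(\beta-\lambda\beta/|\beta|)\mathbf{1}_{\{|\beta|>\lambda\}}$, and $$M_C(\epsilon,\alpha)=\epsilon(1+\alpha^2)+(1-\epsilon)\left[\sqrt{2\pi}\,\phi(\sqrt2\alpha)-2\alpha\sqrt{\pi}\,\Phi(-\sqrt2\alpha)\right],\quad \alpha^\dagger=\arg\min_{\alpha\ge0}M_C(\epsilon,\alpha).$$ Here $\phi,\Phi$ are the standard Gaussian density and CDF. The MSE-optimal $\delta^\dagger$ is the minimizer over $\delta$ of the state-evolution fixed-point MSE $\mathrm{Err}_\infty=\frac{M\delta^2\sigma_0^2}{\delta-M}$ (with $M=M(\epsilon,\alpha^\dagger)$ or $M_C(\epsilon,\alpha^\dagger)$), assuming AMP converges. *)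

theory Defs
  imports "HOL-Probability.Probability"
begin

abbreviation phi :: "real \<Rightarrow> real" where
  "phi \<equiv> std_normal_density"

definition Phi :: "real \<Rightarrow> real" where
  "Phi x = (LBINT t:{..x}. std_normal_density t)"

text \<open>Real case: minimax MSE of soft thresholding under the least-favorable prior.\<close>
definition M_R :: "real \<Rightarrow> real \<Rightarrow> real" where
  "M_R \<epsilon> \<alpha> = \<epsilon> * (1 + \<alpha>\<^sup>2)
     + (1 - \<epsilon>) * (2 * (1 + \<alpha>\<^sup>2) * Phi (-\<alpha>) - 2 * \<alpha> * phi \<alpha>)"

definition M_C :: "real \<Rightarrow> real \<Rightarrow> real" where
  "M_C \<epsilon> \<alpha> = \<epsilon> * (1 + \<alpha>\<^sup>2)
     + (1 - \<epsilon>) * (sqrt (2 * pi) * phi (sqrt 2 * \<alpha>)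
                     - 2 * \<alpha> * sqrt pi * Phi (- sqrt 2 * \<alpha>))"

text \<open>State-evolution fixed-point MSE as a function of the measurement ratio delta,
  valid for delta > M.\<close>
definition Err_inf :: "real \<Rightarrow> real \<Rightarrow> real \<Rightarrow> real" where
  "Err_inf M \<sigma>0 \<delta> = M * \<delta>\<^sup>2 * \<sigma>0\<^sup>2 / (\<delta> - M)"

end

theory Submission imports Defs "HOL-Real_Asymp.Real_Asymp" begin

lemma tail_FTC:
  fixes F f :: "real \<Rightarrow> real"
  assumes D: "\<And>x. x < b \<Longrightarrow> DERIV F x :> f x"
    and C: "\<And>x. x < b \<Longrightarrow> isCont f x"
    and N: "\<And>x. x < b \<Longrightarrow> 0 \<le> f x"
    and L: "(F \<longlongrightarrow> 0) at_bot"
    and Cb: "isCont F b"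
  shows "set_integrable lborel {..<b} f" "(LBINT x:{..<b}. f x) = F b"
proof -
  have lim: "((F \<circ> real_of_ereal) \<longlongrightarrow> F b) (at_left (ereal b))"
    unfolding ereal_tendsto_simps using Cb
    by (simp add: continuous_at filterlim_at_split)
  have lim0: "((F \<circ> real_of_ereal) \<longlongrightarrow> 0) (at_right (-\<infinity>))"
    unfolding ereal_tendsto_simps using L .
  have "set_integrable lborel (einterval (-\<infinity>) (ereal b)) f \<and>
        (LBINT x=-\<infinity>..ereal b. f x) = F b - 0"
    using D C N by (intro conjI interval_integral_FTC_nonneg[OF _ _ _ _ lim0 lim]) auto
  then show "set_integrable lborel {..<b} f" "(LBINT x:{..<b}. f x) = F b"
    by (auto simp: interval_lebesgue_integral_le_eq)
qed

lemma phi_deriv: "DERIV phi x :> - x * phi x"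
proof -
  have "((\<lambda>x. (1 / sqrt (2 * pi)) * exp (- x\<^sup>2 / 2)) has_real_derivative
          (1 / sqrt (2 * pi)) * (exp (- x\<^sup>2 / 2) * (- (2 * x) / 2))) (at x)"
    by (intro DERIV_cmult DERIV_fun_exp) (auto intro!: derivative_eq_intros)
  then show ?thesis unfolding std_normal_density_def by (simp add: field_simps)
qed

lemma phi_at_bot: "(phi \<longlongrightarrow> 0) at_bot"
  unfolding std_normal_density_def by real_asymp

lemma tail_moment:
  assumes "b \<le> 0"
  shows "set_integrable lborel {..<b} (\<lambda>x. - x * phi x)" "(LBINT x:{..<b}. - x * phi x) = phi b"
proof -
  have nn: "\<And>x. x < b \<Longrightarrow> 0 \<le> - x * phi x" using assms
    by (intro mult_nonneg_nonneg) auto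
  have c: "\<And>x. isCont (\<lambda>x. - x * phi x) x"
    by (intro continuous_intros DERIV_isCont[OF phi_deriv])
  show "set_integrable lborel {..<b} (\<lambda>x. - x * phi x)"
    by (rule tail_FTC(1)[OF phi_deriv c nn phi_at_bot DERIV_isCont[OF phi_deriv]])
  show "(LBINT x:{..<b}. - x * phi x) = phi b"
    by (rule tail_FTC(2)[OF phi_deriv c nn phi_at_bot DERIV_isCont[OF phi_deriv]])
qed

lemma phi_even: "phi (- x) = phi x"
  by (simp add: std_normal_density_def)

lemma phi_mono: "\<bar>x\<bar> \<le> \<bar>y\<bar> \<Longrightarrow> phi y \<le> phi x"
  unfolding std_normal_density_def
  by (auto intro!: mult_left_mono divide_right_mono simp: abs_le_square_iff)

lemma phi_pos: "phi x > 0"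
  by (simp add: std_normal_density_def)

lemma Phi_open: "Phi a = (LBINT t:{..<a}. phi t)"
  unfolding Phi_def
proof (rule set_integral_cong_set)
  show "AE x in lborel. (x \<in> {..<a}) = (x \<in> {..a})"
    using AE_lborel_singleton[of a] by eventually_elim auto
qed (auto simp: set_borel_measurable_def)

lemma phi_int_set: "set_integrable lborel A phi" if "A \<in> sets lborel"
  unfolding set_integrable_def using that by (intro integrable_mult_indicator) auto

lemma mills_upper:
  assumes "u \<ge> 0" shows "u * Phi (- u) \<le> phi u"
proof -
  have "u * Phi (- u) = (LBINT x:{..<-u}. u * phi x)"
    by (simp add: Phi_open)
  also have "\<dots> \<le> (LBINT x:{..<-u}. - x * phi x)"
    using assms tail_moment(1)[of "-u"] phi_int_set[of "{..<-u}"]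
    by (intro set_integral_mono) (auto simp: mult_right_mono[of u "-x" "phi x" for x, simplified])
  also have "\<dots> = phi u" using assms tail_moment(2)[of "-u"] phi_even by simp
  finally show ?thesis .
qed

lemma Phi_nonneg: "Phi a \<ge> 0"
  unfolding Phi_def set_lebesgue_integral_def by (intro Bochner_Integration.integral_nonneg) (auto simp: indicator_def)

lemma Phi_0: "Phi 0 = 1/2"
proof -
  have "1 = (\<integral>x. phi x \<partial>lborel)" by simp
  also have "\<dots> = (\<integral>x. indicator {..0} x * phi x + indicator {0<..} x * phi x \<partial>lborel)"
    by (rule Bochner_Integration.integral_cong) (auto simp: indicator_def)
  also have "\<dots> = Phi 0 + (LBINT t:{0<..}. phi t)"
    unfolding Phi_def set_lebesgue_integral_def real_scaleR_def
    using phi_int_set[of "{..0}"] phi_int_set[of "{0<..}"]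
    by (intro Bochner_Integration.integral_add) (auto simp: set_integrable_def)
  also have "(LBINT t:{0<..}. phi t) = (LBINT t:{..<0}. phi t)"
    unfolding set_lebesgue_integral_def
    by (subst lborel_integral_real_affine[where c="-1" and t=0])
       (auto simp: indicator_def normal_density_def)
  also have "\<dots> = Phi 0" by (simp add: Phi_open)
  finally show ?thesis by simp
qed


lemma Phi_split:
  assumes "u \<ge> 0"
  shows "Phi (- u) = 1/2 - (LBINT x:{-u..<0}. phi x)"
proof -
  have e: "{..<0::real} = {..<-u} \<union> {-u..<0}" using assms by auto
  have "Phi 0 = (LBINT x:{..<-u} \<union> {-u..<0}. phi x)"
    unfolding Phi_open e[symmetric] ..
  also have "\<dots> = (LBINT x:{..<-u}. phi x) + (LBINT x:{-u..<0}. phi x)"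
    by (rule set_integral_Un) (auto intro: phi_int_set)
  finally have "Phi 0 = (LBINT x:{..<-u}. phi x) + (LBINT x:{-u..<0}. phi x)" .
  then show ?thesis using Phi_0 by (simp add: Phi_open)
qed

lemma const_int: "set_integrable lborel {(a::real)..<b} (\<lambda>x. c::real)"
  by (rule set_integrable_subset[where A="{a..b}"]) (auto intro!: borel_integrable_atLeastAtMost' continuous_intros)

lemma const_val: "u \<ge> 0 \<Longrightarrow> (LBINT x:{-u..<0}. (c::real)) = u * c"
  by (subst set_integral_const) auto

lemma mid_bounds:
  assumes "u \<ge> 0"
  shows "u * phi u \<le> (LBINT x:{-u..<0}. phi x)" "(LBINT x:{-u..<0}. phi x) \<le> u * phi 0"
proof -
  have m: "measure lborel {-u..<0} = u" using assms by simp
  have "(LBINT x:{-u..<0}. phi u) \<le> (LBINT x:{-u..<0}. phi x)"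
    by (intro set_integral_mono phi_int_set const_int) (auto intro!: phi_mono)
  then show "u * phi u \<le> (LBINT x:{-u..<0}. phi x)"
    using const_val[OF assms] by simp
  have "(LBINT x:{-u..<0}. phi x) \<le> (LBINT x:{-u..<0}. phi 0)"
    by (intro set_integral_mono phi_int_set const_int) (auto intro!: phi_mono)
  then show "(LBINT x:{-u..<0}. phi x) \<le> u * phi 0"
    using const_val[OF assms] by simp
qed

lemma H_deriv: "DERIV (\<lambda>t. - t * phi t / (1 + t\<^sup>2)) x :>
   phi x * ((1 + x\<^sup>2)\<^sup>2 - 2) / (1 + x\<^sup>2)\<^sup>2"
proof -
  have p: "1 + x\<^sup>2 \<noteq> 0" by (metis add_pos_nonneg less_numeral_extra(1) zero_le_power2 less_irrefl)
  show ?thesis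
    by (rule DERIV_cong[OF DERIV_divide[OF DERIV_mult[OF DERIV_minus[OF DERIV_ident] phi_deriv]
         DERIV_add[OF DERIV_const DERIV_power[OF DERIV_ident]] p]])
       (simp add: algebra_simps power2_eq_square)
qed

lemma mills_lower_big:
  assumes u: "u \<ge> 2/3" shows "u * phi u / (1 + u\<^sup>2) \<le> Phi (- u)"
proof -
  let ?h = "\<lambda>x. phi x * ((1 + x\<^sup>2)\<^sup>2 - 2) / (1 + x\<^sup>2)\<^sup>2"
  let ?H = "\<lambda>t. - t * phi t / (1 + t\<^sup>2)"
  have nn: "0 \<le> ?h x" if "x < - u" for x
  proof -
    have "(2/3)\<^sup>2 \<le> (-x)\<^sup>2" using that u by (intro power_mono) auto
    then have "(2/3)\<^sup>2 \<le> x\<^sup>2" by simp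
    then have "(13/9) \<le> 1 + x\<^sup>2" by (simp add: power2_eq_square)
    then have "(13/9)\<^sup>2 \<le> (1 + x\<^sup>2)\<^sup>2" by (intro power_mono) auto
    then have "0 \<le> (1 + x\<^sup>2)\<^sup>2 - 2" by (simp add: power2_eq_square)
    then show ?thesis by (intro divide_nonneg_nonneg mult_nonneg_nonneg) auto
  qed
  have c: "isCont ?h x" for x
  proof -
    have "0 < 1 + x\<^sup>2" by (simp add: add_pos_nonneg)
    then have "(1 + x\<^sup>2)\<^sup>2 \<noteq> 0" by simp
    then show ?thesis by (intro continuous_intros DERIV_isCont[OF phi_deriv]) auto
  qed
  have lim: "(?H \<longlongrightarrow> 0) at_bot"
    unfolding std_normal_density_def by real_asymp
  have ci: "isCont ?H (-u)" by (rule DERIV_isCont[OF H_deriv])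
  have "?H (-u) = (LBINT x:{..<-u}. ?h x)"
    by (rule tail_FTC(2)[OF H_deriv c nn lim ci, symmetric])
  also have "\<dots> \<le> (LBINT x:{..<-u}. phi x)"
  proof (intro set_integral_mono phi_int_set tail_FTC(1)[OF H_deriv c nn lim ci])
    fix x :: real
    have p0: "0 < 1 + x\<^sup>2" by (simp add: add_pos_nonneg)
    then have p: "0 < (1 + x\<^sup>2)\<^sup>2" by simp
    have "phi x * ((1 + x\<^sup>2)\<^sup>2 - 2) \<le> phi x * (1 + x\<^sup>2)\<^sup>2"
      by (intro mult_left_mono) auto
    then show "?h x \<le> phi x" using p by (simp add: divide_le_eq)
  qed auto
  finally show ?thesis by (simp add: Phi_open phi_even)
qed

lemma sqrt2pi: "7/3 \<le> sqrt (2 * pi)" "sqrt (2*pi) \<le> 3"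
proof -
  show "7/3 \<le> sqrt (2 * pi)" using pi_gt3 by (intro real_le_rsqrt) (simp add: power2_eq_square)
  show "sqrt (2*pi) \<le> 3" using pi_less_4 by (intro real_le_lsqrt) (auto simp: power2_eq_square)
qed

lemma phi0: "phi 0 = 1 / sqrt (2 * pi)" by (simp add: std_normal_density_def)

lemma mills_lower:
  assumes u: "u \<ge> 0" shows "u * phi u \<le> (1 + u\<^sup>2) * Phi (- u)"
proof (cases "u \<ge> 2/3")
  case True
  then show ?thesis using mills_lower_big[OF True]
    by (simp add: divide_le_eq add_pos_nonneg mult.commute)
next
  case False
  have p0: "phi 0 \<le> 3/7" unfolding phi0 using sqrt2pi(1)
    by (simp add: divide_le_eq)
  have b1: "Phi (-u) \<ge> 1/2 - u * phi 0" using Phi_split[OF u] mid_bounds(2)[OF u] by simp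
  have b2: "u * phi 0 \<le> 2/3 * phi 0" using False by (intro mult_right_mono) auto
  have a: "Phi (-u) \<ge> phi 0 / 2" using p0 b1 b2 by simp
  have "u * phi u \<le> u * phi 0" using u by (intro mult_left_mono phi_mono) auto
  also have "\<dots> \<le> (1 + u\<^sup>2) * (phi 0 / 2)"
  proof -
    have "2 * u \<le> 1 + u\<^sup>2" using sum_squares_ge_zero[of "u - 1" 0] by (simp add: power2_eq_square algebra_simps)
    then have "2 * u * (phi 0 / 2) \<le> (1 + u\<^sup>2) * (phi 0 / 2)"
      using phi_pos[of 0] by (intro mult_right_mono) auto
    then show ?thesis by simp
  qed
  also have "\<dots> \<le> (1 + u\<^sup>2) * Phi (-u)" using a by (intro mult_left_mono) auto
  finally show ?thesis .
qed

lemma M_R_pos: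
  assumes "0 < e" "e < 1" "a \<ge> 0" shows "M_R e a > 0"
proof -
  have "0 \<le> 2 * (1 + a\<^sup>2) * Phi (-a) - 2 * a * phi a" using mills_lower[OF assms(3)] by linarith
  then have "0 \<le> (1 - e) * (2 * (1 + a\<^sup>2) * Phi (-a) - 2 * a * phi a)" using assms by simp
  moreover have "0 < e * (1 + a\<^sup>2)" using assms by (simp add: add_pos_nonneg)
  ultimately show ?thesis unfolding M_R_def by linarith
qed

lemma M_C_pos:
  assumes "0 < e" "e < 1" "a \<ge> 0" shows "M_C e a > 0"
proof -
  define u where "u = sqrt 2 * a"
  have u: "u \<ge> 0" using assms by (simp add: u_def)
  have e1: "- sqrt 2 * a = - u" by (simp add: u_def)
  have e2: "2 * a * sqrt pi = sqrt (2 * pi) * u"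
    by (simp add: u_def real_sqrt_mult)
  have "sqrt (2 * pi) * phi u - 2 * a * sqrt pi * Phi (- u) = sqrt (2*pi) * (phi u - u * Phi (-u))"
    by (subst e2) (simp add: algebra_simps)
  also have "\<dots> \<ge> 0" using mills_upper[OF u] by simp
  finally have "0 \<le> (1 - e) * (sqrt (2 * pi) * phi u - 2 * a * sqrt pi * Phi (- u))" using assms by simp
  moreover have "0 < e * (1 + a\<^sup>2)" using assms by (simp add: add_pos_nonneg)
  ultimately show ?thesis unfolding M_C_def e1 u_def[symmetric] by linarith
qed

lemma phi_lb: assumes "0 \<le> a" "a \<le> 1" shows "phi a \<ge> 1/6"
proof -
  have "1 + (- a\<^sup>2/2) \<le> exp (- a\<^sup>2/2)" by (rule exp_ge_add_one_self)
  moreover have "a\<^sup>2 \<le> 1" using assms by (simp add: power_le_one)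
  ultimately have "exp (- a\<^sup>2/2) \<ge> 1/2" by simp
  moreover have "1 / sqrt (2*pi) \<ge> 1/3" using sqrt2pi(2) by (simp add: divide_simps)
  ultimately have "(1/3) * (1/2) \<le> (1 / sqrt (2*pi)) * exp (- a\<^sup>2/2)"
    by (intro mult_mono) auto
  then show ?thesis by (simp add: std_normal_density_def)
qed

lemma M_R_small:
  assumes "0 < e" "e < 1" shows "M_R e ((1 - e)/4) < 1"
proof -
  define a where "a = (1 - e)/4"
  define p where "p = phi a"
  have a: "0 < a" "a \<le> 1/4" using assms by (auto simp: a_def)
  have p: "p \<ge> 1/6" using phi_lb[of a] a by (simp add: p_def)
  have P: "Phi (-a) \<le> 1/2 - a * p" using Phi_split[of a] mid_bounds(1)[of a] a by (simp add: p_def)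
  have "M_R e a = e * (1 + a\<^sup>2) + (1 - e) * (2 * (1 + a\<^sup>2) * Phi (-a) - 2 * a * p)"
    by (simp add: M_R_def p_def)
  also have "\<dots> \<le> e * (1 + a\<^sup>2) + (1 - e) * (2 * (1 + a\<^sup>2) * (1/2 - a * p) - 2 * a * p)"
    using P assms by (intro add_left_mono mult_left_mono diff_right_mono) (auto simp: add_pos_nonneg)
  also have "\<dots> = 1 + a\<^sup>2 - (1 - e) * 2 * a * p * (2 + a\<^sup>2)" by (simp add: algebra_simps)
  also have "\<dots> < 1"
  proof -
    have e4: "1 - e = 4 * a" by (simp add: a_def)
    have "(1 - e) * 2 * a * p * (2 + a\<^sup>2) = (4 * a) * 2 * a * p * (2 + a\<^sup>2)"
      by (simp only: e4)
    also have "\<dots> = a\<^sup>2 * (8 * p * (2 + a\<^sup>2))"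
      by (simp add: power2_eq_square algebra_simps)
    finally have "(1 - e) * 2 * a * p * (2 + a\<^sup>2) = a\<^sup>2 * (8 * p * (2 + a\<^sup>2))" .
    moreover have "8 * p * (2 + a\<^sup>2) \<ge> 8 * (1/6) * 2"
      using p by (intro mult_mono) auto
    moreover have "a\<^sup>2 > 0" using a by simp
    ultimately have "a\<^sup>2 * 1 < a\<^sup>2 * (8 * p * (2 + a\<^sup>2))"
      by (intro mult_strict_left_mono) auto
    then have "(1 - e) * 2 * a * p * (2 + a\<^sup>2) > a\<^sup>2"
      unfolding \<open>(1 - e) * 2 * a * p * (2 + a\<^sup>2) = a\<^sup>2 * (8 * p * (2 + a\<^sup>2))\<close> by simp
    then show ?thesis by simp
  qed
  finally show ?thesis by (simp add: a_def)
qed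

lemma M_C_small:
  assumes "0 < e" "e < 1" shows "M_C e ((1 - e)/4) < 1"
proof -
  define a where "a = (1 - e)/4"
  define u where "u = sqrt 2 * a"
  have a: "0 < a" "a \<le> 1/4" using assms by (auto simp: a_def)
  have u: "u \<ge> 0" using a by (simp add: u_def)
  have e1: "- sqrt 2 * a = - u" by (simp add: u_def)
  have sp: "sqrt pi \<ge> 1" using pi_gt3 by simp
  have s2: "sqrt (2 * pi) * phi 0 = 1" by (simp add: phi0)
  have P: "Phi (-u) \<ge> 1/2 - u * phi 0" using Phi_split[OF u] mid_bounds(2)[OF u] by simp
  have q: "2 * a * sqrt pi * (u * phi 0) = 2 * a\<^sup>2"
  proof -
    have "2 * a * sqrt pi * (u * phi 0) = 2 * a * a * (sqrt 2 * sqrt pi * phi 0)"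
      by (simp add: u_def algebra_simps)
    also have "sqrt 2 * sqrt pi * phi 0 = 1" using s2 by (simp add: real_sqrt_mult)
    finally show ?thesis by (simp add: power2_eq_square)
  qed
  have "sqrt (2 * pi) * phi u \<le> sqrt (2 * pi) * phi 0"
    by (intro mult_left_mono phi_mono) auto
  moreover have "2 * a * sqrt pi * Phi (- u) \<ge> 2 * a * sqrt pi * (1/2 - u * phi 0)"
    using P a by (intro mult_left_mono) auto
  moreover have "2 * a * sqrt pi * (1/2 - u * phi 0) = a * sqrt pi - 2 * a\<^sup>2"
    using q by (simp add: right_diff_distrib)
  ultimately have C: "sqrt (2 * pi) * phi u - 2 * a * sqrt pi * Phi (- u) \<le> 1 - a * sqrt pi + 2 * a\<^sup>2"
    using s2 by linarith
  have "M_C e a \<le> e * (1 + a\<^sup>2) + (1 - e) * (1 - a * sqrt pi + 2 * a\<^sup>2)"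
    unfolding M_C_def e1 u_def[symmetric] using C assms by (intro add_left_mono mult_left_mono) auto
  also have "\<dots> \<le> e * (1 + a\<^sup>2) + (1 - e) * (1 - a + 2 * a\<^sup>2)"
    using sp a assms by (intro add_left_mono mult_left_mono) auto
  also have "\<dots> = 1 + a\<^sup>2 * (e + 8 * a - 4)"
  proof -
    have ee: "e = 1 - 4 * a" by (simp add: a_def field_simps)
    show ?thesis unfolding ee power2_eq_square by (simp add: algebra_simps)
  qed
  also have "\<dots> < 1"
  proof -
    have "8 * a = 2 - 2 * e" by (simp add: a_def field_simps)
    then have "e + 8 * a - 4 < 0" using assms by linarith
    moreover have "a\<^sup>2 > 0" using a by simp
    ultimately show ?thesis by (simp add: mult_pos_neg)
  qed
  finally show ?thesis by (simp add: a_def)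
qed

lemma err_argmin:
  assumes M: "0 < M" and s: "0 < s" and am: "is_arg_min (Err_inf M s) (\<lambda>d. d > M) d"
  shows "d = 2 * M"
proof (rule ccontr)
  assume ne: "d \<noteq> 2 * M"
  have dM: "d > M" using am by (simp add: is_arg_min_def)
  have "Err_inf M s d - Err_inf M s (2 * M) = M * s\<^sup>2 * (d - 2 * M)\<^sup>2 / (d - M)"
    using dM M by (simp add: Err_inf_def field_simps power2_eq_square)
  moreover have "M * s\<^sup>2 * (d - 2 * M)\<^sup>2 / (d - M) > 0"
    using dM M s ne by (intro divide_pos_pos mult_pos_pos) auto
  ultimately have "Err_inf M s (2 * M) < Err_inf M s d" by simp
  moreover have "2 * M > M" using M by simp
  ultimately show False using am by (auto simp: is_arg_min_def)
qed

lemma generic: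
  fixes f :: "real \<Rightarrow> real"
  assumes pos: "\<And>a. a \<ge> 0 \<Longrightarrow> f a > 0" and a0: "a0 \<ge> 0" "f a0 < 1" and s: "s > 0"
    and am: "is_arg_min f (\<lambda>a. a \<ge> 0) ad"
    and dm: "is_arg_min (Err_inf (f ad) s) (\<lambda>d. d > f ad) dd"
  shows "dd < 2 \<and> (f ad < 1/2 \<longrightarrow> dd < 1)"
proof -
  have ad: "ad \<ge> 0" "\<not> f a0 < f ad" using am a0 by (auto simp: is_arg_min_def)
  then have "f ad < 1" using a0 by simp
  moreover have "dd = 2 * f ad" by (rule err_argmin[OF pos[OF ad(1)] s dm])
  ultimately show ?thesis by simp
qed


theorem proposition2:
  fixes \<epsilon> \<sigma>0 :: real
  assumes eps: "0 < \<epsilon>" "\<epsilon> < 1"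
    and sigma: "\<sigma>0 > 0"
  shows
    "(\<forall>\<alpha>d \<delta>d.
        is_arg_min (M_R \<epsilon>) (\<lambda>a. a \<ge> 0) \<alpha>d \<longrightarrow>
        is_arg_min (Err_inf (M_R \<epsilon> \<alpha>d) \<sigma>0) (\<lambda>d. d > M_R \<epsilon> \<alpha>d) \<delta>d \<longrightarrow>
        \<delta>d < 2 \<and> (M_R \<epsilon> \<alpha>d < 1/2 \<longrightarrow> \<delta>d < 1))
   \<and> (\<forall>\<alpha>d \<delta>d.
        is_arg_min (M_C \<epsilon>) (\<lambda>a. a \<ge> 0) \<alpha>d \<longrightarrow>
        is_arg_min (Err_inf (M_C \<epsilon> \<alpha>d) \<sigma>0) (\<lambda>d. d > M_C \<epsilon> \<alpha>d) \<delta>d \<longrightarrow>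
        \<delta>d < 2 \<and> (M_C \<epsilon> \<alpha>d < 1/2 \<longrightarrow> \<delta>d < 1))"
proof (intro conjI allI impI)
  fix ad dd
  assume "is_arg_min (M_R \<epsilon>) (\<lambda>a. a \<ge> 0) ad"
    "is_arg_min (Err_inf (M_R \<epsilon> ad) \<sigma>0) (\<lambda>d. d > M_R \<epsilon> ad) dd"
  then have "dd < 2 \<and> (M_R \<epsilon> ad < 1/2 \<longrightarrow> dd < 1)"
    using eps sigma by (intro generic[of "M_R \<epsilon>" "(1 - \<epsilon>)/4"] M_R_pos M_R_small) auto
  then show "dd < 2" "M_R \<epsilon> ad < 1/2 \<Longrightarrow> dd < 1" by auto
next
  fix ad dd
  assume "is_arg_min (M_C \<epsilon>) (\<lambda>a. a \<ge> 0) ad"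
    "is_arg_min (Err_inf (M_C \<epsilon> ad) \<sigma>0) (\<lambda>d. d > M_C \<epsilon> ad) dd"
  then have "dd < 2 \<and> (M_C \<epsilon> ad < 1/2 \<longrightarrow> dd < 1)"
    using eps sigma by (intro generic[of "M_C \<epsilon>" "(1 - \<epsilon>)/4"] M_C_pos M_C_small) auto
  then show "dd < 2" "M_C \<epsilon> ad < 1/2 \<Longrightarrow> dd < 1" by auto
qed

end
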